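(* Let $N\ge1$ be an integer and $f\in L^2(\pi)$. Then $\langle f,P_Nf\rangle_\pi=\frac1N\int_{W_N}\frac{\big(\sum_{i=1}^Nw(z_i)f(z_i)\big)^2}{\sum_{j=1}^Nw(z_j)}\prod_{n=1}^Nq(dz_n)\ge0$, and $\langle f,P_Nf\rangle_\pi=0$ if and only if $\|f\|_\pi=0$.
   Context: Let $\pi,q$ be probability densities with respect to a $\sigma$-finite measure $\mu$ on $(\mathbb{X},\mathcal{X})$ with $q>0$ wherever $\pi>0$; $\pi(dx)=\pi(x)\mu(dx)$, $q(dx)=q(x)\mu(dx)$, $\mathbb{S}=\{\pi>0\}$, $w=\pi/q$ on $\mathbb{S}$ and $0$ elsewhere. $W_N=\{z\in\mathbb{X}^N:\sum_{i=1}^Nw(z_i)>0\}$. For $z_1\in\mathbb{S}$, $P_N(z_1,A)=\int_{\mathbb{X}^{N-1}}\sum_{i=1}^N\frac{w(z_i)}{\sum_{j=1}^Nw(z_j)}\mathbf 1\{z_i\in A\}\prod_{n=2}^Nq(dz_n)$, $P_1(z,\cdot)=\delta_z$, $P_Nf(x)=\int f(y)P_N(x,dy)$; $\langle g,h\rangle_\pi=\int gh\,d\pi$, $\|g\|_\pi^2=\langle g,g\rangle_\pi$. *)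

theory Defs
  imports "HOL-Probability.Probability"
begin

definition wt :: "('a \<Rightarrow> real) \<Rightarrow> ('a \<Rightarrow> real) \<Rightarrow> 'a \<Rightarrow> real" where
  "wt p q x = (if p x > 0 then p x / q x else 0)"

text \<open>Indices 1..N of the paper are rendered as 0..N-1; coordinate 0 is the current state z_1.
  W_N = {z : sum_i w(z_i) > 0}.\<close>
definition WN :: "'a measure \<Rightarrow> ('a \<Rightarrow> real) \<Rightarrow> ('a \<Rightarrow> real) \<Rightarrow> nat \<Rightarrow> (nat \<Rightarrow> 'a) set" where
  "WN M p q N = {z \<in> space (PiM {..<N} (\<lambda>_. M)). (\<Sum>j<N. wt p q (z j)) > 0}"

definition PN :: "'a measure \<Rightarrow> ('a \<Rightarrow> real) \<Rightarrow> ('a \<Rightarrow> real) \<Rightarrow> nat \<Rightarrow> ('a \<Rightarrow> real) \<Rightarrow> 'a \<Rightarrow> real" where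
  "PN M p q N f x =
     (if N = 1 then f x else
      (\<integral>z'. (let z = z'(0 := x) in
               (\<Sum>i<N. wt p q (z i) / (\<Sum>j<N. wt p q (z j)) * f (z i)))
        \<partial>PiM {1..<N} (\<lambda>_. density M q)))"

definition inner_pi :: "'a measure \<Rightarrow> ('a \<Rightarrow> real) \<Rightarrow> ('a \<Rightarrow> real) \<Rightarrow> ('a \<Rightarrow> real) \<Rightarrow> real" where
  "inner_pi M p g h = (\<integral>x. g x * h x \<partial>density M p)"

end

theory Submission
  imports Defs
begin

lemma wt_meas[measurable]:
  assumes [measurable]: "p \<in> borel_measurable M" "q \<in> borel_measurable M"
  shows "wt p q \<in> borel_measurable M"
  unfolding wt_def[abs_def] by measurable

lemma bound_term:
  fixes a b :: "nat \<Rightarrow> real"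
  assumes fin: "finite I" and k: "k \<in> I" and nn: "\<forall>i\<in>I. a i \<ge> 0"
  shows "\<bar>a k * b k * (\<Sum>i\<in>I. a i * b i) / (\<Sum>i\<in>I. a i)\<bar>
           \<le> (\<Sum>i\<in>I. a k * (b k)\<^sup>2 + a i * (b i)\<^sup>2)"
proof -
  define S where "S = (\<Sum>i\<in>I. a i)"
  have S0: "S \<ge> 0" unfolding S_def using nn by (simp add: sum_nonneg)
  have le: "\<And>i. i \<in> I \<Longrightarrow> a i \<le> S" unfolding S_def
    using fin nn by (intro member_le_sum) auto
  have rhs0: "0 \<le> (\<Sum>i\<in>I. a k * (b k)\<^sup>2 + a i * (b i)\<^sup>2)"
    using nn k by (intro sum_nonneg) auto
  show ?thesis
  proof (cases "S = 0")
    case True then show ?thesis using rhs0 by (simp add: S_def[symmetric])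
  next
    case False
    then have Sp: "S > 0" using S0 by simp
    have "\<bar>a k * b k * (\<Sum>i\<in>I. a i * b i) / S\<bar> = \<bar>\<Sum>i\<in>I. a k * b k * (a i * b i) / S\<bar>"
      by (simp add: sum_distrib_left sum_divide_distrib)
    also have "\<dots> \<le> (\<Sum>i\<in>I. \<bar>a k * b k * (a i * b i) / S\<bar>)" by (rule sum_abs)
    also have "\<dots> \<le> (\<Sum>i\<in>I. a k * (b k)\<^sup>2 + a i * (b i)\<^sup>2)"
    proof (rule sum_mono)
      fix i assume i: "i \<in> I"
      have ak: "a k \<ge> 0" "a k \<le> S" using nn k le by auto
      have ai: "a i \<ge> 0" "a i \<le> S" using nn i le by auto
      have bb: "\<bar>b k * b i\<bar> \<le> (b k)\<^sup>2 + (b i)\<^sup>2"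
      proof -
        have "0 \<le> (\<bar>b k\<bar> - \<bar>b i\<bar>)\<^sup>2" by simp
        then have "\<bar>b i\<bar> * (\<bar>b k\<bar> * 2) \<le> b i * b i + b k * b k"
          by (simp add: power2_eq_square abs_mult algebra_simps)
        moreover have "0 \<le> \<bar>b i\<bar> * \<bar>b k\<bar>" by simp
        ultimately have "\<bar>b i\<bar> * \<bar>b k\<bar> \<le> b i * b i + b k * b k" by linarith
        then show ?thesis by (simp add: power2_eq_square abs_mult mult.commute add.commute)
      qed
      have "\<bar>a k * b k * (a i * b i)\<bar> = a k * a i * \<bar>b k * b i\<bar>"
        using ak ai by (simp add: abs_mult)
      also have "\<dots> \<le> a k * a i * ((b k)\<^sup>2 + (b i)\<^sup>2)"
        using bb ak ai by (intro mult_left_mono) auto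
      also have "\<dots> = a i * (a k * (b k)\<^sup>2) + a k * (a i * (b i)\<^sup>2)" by (simp add: algebra_simps)
      also have "\<dots> \<le> S * (a k * (b k)\<^sup>2) + S * (a i * (b i)\<^sup>2)"
        using ak ai by (intro add_mono mult_right_mono) auto
      finally have "\<bar>a k * b k * (a i * b i)\<bar> \<le> S * (a k * (b k)\<^sup>2 + a i * (b i)\<^sup>2)"
        by (simp add: algebra_simps)
      then show "\<bar>a k * b k * (a i * b i) / S\<bar> \<le> a k * (b k)\<^sup>2 + a i * (b i)\<^sup>2"
        using Sp by (simp add: pos_divide_le_eq mult.commute)
    qed
    finally show ?thesis by (simp add: S_def)
  qed
qed


lemma sum_swap_idx:
  fixes g :: "nat \<Rightarrow> real"
  assumes "k < N"
  shows "(\<Sum>i<N. g (if i = 0 then k else if i = k then 0 else i)) = (\<Sum>i<N. g i)"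
  by (rule sum.reindex_bij_witness[of _ "\<lambda>i. if i = 0 then k else if i = k then 0 else i"
        "\<lambda>i. if i = 0 then k else if i = k then 0 else i"]) (use assms in auto)

theorem lemma6p4:
  fixes M :: "'a measure" and p q f :: "'a \<Rightarrow> real" and N :: nat
  assumes "sigma_finite_measure M"
    and "p \<in> borel_measurable M" and "\<And>x. x \<in> space M \<Longrightarrow> p x \<ge> 0"
    and "(\<integral>\<^sup>+ x. ennreal (p x) \<partial>M) = 1"
    and "q \<in> borel_measurable M" and "\<And>x. x \<in> space M \<Longrightarrow> q x \<ge> 0"
    and "(\<integral>\<^sup>+ x. ennreal (q x) \<partial>M) = 1"
    and "\<And>x. x \<in> space M \<Longrightarrow> p x > 0 \<Longrightarrow> q x > 0"
    and "N \<ge> 1"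
    and "f \<in> borel_measurable M" and "integrable (density M p) (\<lambda>x. (f x)\<^sup>2)"
  shows "(inner_pi M p f (PN M p q N f) =
           (1 / real N) * (\<integral>z. indicator (WN M p q N) z *
              ((\<Sum>i<N. wt p q (z i) * f (z i))\<^sup>2 / (\<Sum>j<N. wt p q (z j)))
            \<partial>PiM {..<N} (\<lambda>_. density M q)))
         \<and> inner_pi M p f (PN M p q N f) \<ge> 0
         \<and> (inner_pi M p f (PN M p q N f) = 0 \<longleftrightarrow> inner_pi M p f f = 0)"
proof -
  note pm[measurable] = assms(2) and qm[measurable] = assms(5) and fm[measurable] = assms(10)
  define Q where "Q = density M q"
  have sQ[simp]: "space Q = space M" "sets Q = sets M" by (simp_all add: Q_def)
  have mQ[simp]: "measurable Q = measurable M" "\<And>K. measurable K Q = measurable K M"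
    by (auto simp: Q_def intro!: measurable_cong_sets ext)
  have wm[measurable]: "wt p q \<in> borel_measurable M" by simp
  have fQ[measurable]: "f \<in> borel_measurable Q" "wt p q \<in> borel_measurable Q" by simp_all
  have wnn: "\<And>x. x \<in> space M \<Longrightarrow> wt p q x \<ge> 0"
    using assms(3,6) by (simp add: wt_def)
  have pqw: "\<And>x. x \<in> space M \<Longrightarrow> p x = q x * wt p q x"
    using assms(3,6,8) by (force simp: wt_def)
  have PQ: "prob_space Q"
  proof (rule prob_spaceI)
    have "emeasure Q (space Q) = (\<integral>\<^sup>+ x. ennreal (q x) * indicator (space M) x \<partial>M)"
      by (simp add: Q_def emeasure_density)
    also have "\<dots> = (\<integral>\<^sup>+ x. ennreal (q x) \<partial>M)"
      by (intro nn_integral_cong) simp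
    finally show "emeasure Q (space Q) = 1" using assms(7) by simp
  qed
  interpret Q: prob_space Q by (rule PQ)
  have transfer: "\<And>\<phi>. \<phi> \<in> borel_measurable M \<Longrightarrow>
      integral\<^sup>L (density M p) \<phi> = (\<integral>x. wt p q x * \<phi> x \<partial>Q)"
  proof -
    fix \<phi> :: "'a \<Rightarrow> real" assume [measurable]: "\<phi> \<in> borel_measurable M"
    have "integral\<^sup>L (density M p) \<phi> = (\<integral>x. p x * \<phi> x \<partial>M)"
      using assms(3) by (subst integral_density) (auto intro!: AE_I2)
    also have "\<dots> = (\<integral>x. q x * (wt p q x * \<phi> x) \<partial>M)"
      by (intro Bochner_Integration.integral_cong) (auto simp: pqw)
    also have "\<dots> = (\<integral>x. wt p q x * \<phi> x \<partial>Q)"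
      unfolding Q_def using assms(6) by (subst integral_density) (auto intro!: AE_I2)
    finally show "integral\<^sup>L (density M p) \<phi> = (\<integral>x. wt p q x * \<phi> x \<partial>Q)" .
  qed
  have int_wf2: "integrable Q (\<lambda>x. wt p q x * (f x)\<^sup>2)"
  proof -
    have "integrable M (\<lambda>x. p x * (f x)\<^sup>2)"
      using assms(11) assms(3) by (subst (asm) integrable_density) (auto intro!: AE_I2)
    moreover have "integrable M (\<lambda>x. p x * (f x)\<^sup>2) = integrable M (\<lambda>x. q x * (wt p q x * (f x)\<^sup>2))"
      by (intro Bochner_Integration.integrable_cong) (auto simp: pqw)
    ultimately have "integrable M (\<lambda>x. q x * (wt p q x * (f x)\<^sup>2))" by simp
    then show ?thesis
      unfolding Q_def using assms(6) by (subst integrable_density) (auto intro!: AE_I2)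
  qed

  define I where "I = {..<N}"
  define P where "P = PiM I (\<lambda>_. Q)"
  have finI: "finite I" and I0: "0 \<in> I" using assms(9) by (auto simp: I_def)
  interpret P: prob_space P unfolding P_def by (intro prob_space_PiM PQ)
  interpret PS: product_prob_space "\<lambda>_. Q" I by unfold_locales
  have spaceP: "space P = PiE I (\<lambda>_. space M)" by (simp add: P_def space_PiM)
  define G where "G z = (\<Sum>i<N. wt p q (z i) * f (z i))" for z :: "nat \<Rightarrow> 'a"
  define S where "S z = (\<Sum>j<N. wt p q (z j))" for z :: "nat \<Rightarrow> 'a"
  define F where "F k z = wt p q (z k) * f (z k) * G z / S z" for k z
  have Gm[measurable]: "G \<in> borel_measurable P" unfolding G_def P_def I_def by measurable
  have Sm[measurable]: "S \<in> borel_measurable P" unfolding S_def P_def I_def by measurable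
  have Gm'[measurable]: "G \<in> borel_measurable (PiM I (\<lambda>_. Q))" "S \<in> borel_measurable (PiM I (\<lambda>_. Q))"
    using Gm Sm by (simp_all add: P_def)
  have Fm[measurable]: "\<And>k. k \<in> I \<Longrightarrow> F k \<in> borel_measurable P"
    unfolding F_def P_def by measurable
  have comp: "\<And>k (\<phi>::'a \<Rightarrow> real). k \<in> I \<Longrightarrow> \<phi> \<in> borel_measurable M \<Longrightarrow>
      integral\<^sup>L P (\<lambda>z. \<phi> (z k)) = integral\<^sup>L Q \<phi> \<and> (integrable P (\<lambda>z. \<phi> (z k)) \<longleftrightarrow> integrable Q \<phi>)"
  proof -
    fix k and \<phi> :: "'a \<Rightarrow> real" assume k: "k \<in> I" and [measurable]: "\<phi> \<in> borel_measurable M"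
    have D: "distr P Q (\<lambda>z. z k) = Q" unfolding P_def by (rule distr_PiM_component) (use PQ k in auto)
    have m: "(\<lambda>z. z k) \<in> measurable P Q" unfolding P_def by (rule measurable_component_singleton[OF k])
    show "integral\<^sup>L P (\<lambda>z. \<phi> (z k)) = integral\<^sup>L Q \<phi> \<and> (integrable P (\<lambda>z. \<phi> (z k)) \<longleftrightarrow> integrable Q \<phi>)"
      using integral_distr[OF m, of \<phi>] integrable_distr_eq[OF m, of \<phi>] D by simp
  qed
  have SP: "\<And>z. z \<in> space P \<Longrightarrow> S z \<ge> 0"
    unfolding S_def using wnn by (auto simp: spaceP I_def intro!: sum_nonneg)
  have int_F: "\<And>k. k \<in> I \<Longrightarrow> integrable P (F k)"
  proof -
    fix k assume k: "k \<in> I"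
    define B where "B z = (\<Sum>i\<in>I. wt p q (z k) * (f (z k))\<^sup>2 + wt p q (z i) * (f (z i))\<^sup>2)" for z
    have iB: "integrable P B" unfolding B_def
    proof (intro Bochner_Integration.integrable_sum Bochner_Integration.integrable_add)
      fix i assume i: "i \<in> I"
      show "integrable P (\<lambda>z. wt p q (z k) * (f (z k))\<^sup>2)"
        using comp[OF k, of "\<lambda>x. wt p q x * (f x)\<^sup>2"] int_wf2 by simp
      show "integrable P (\<lambda>z. wt p q (z i) * (f (z i))\<^sup>2)"
        using comp[OF i, of "\<lambda>x. wt p q x * (f x)\<^sup>2"] int_wf2 by simp
    qed
    show "integrable P (F k)"
    proof (rule Bochner_Integration.integrable_bound[OF iB])
      show "F k \<in> borel_measurable P" using k by simp
      show "AE x in P. norm (F k x) \<le> norm (B x)"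
      proof (rule AE_I2)
        fix z assume z: "z \<in> space P"
        have "\<bar>F k z\<bar> \<le> B z"
          unfolding F_def G_def S_def B_def
          using bound_term[of I k "\<lambda>i. wt p q (z i)" "\<lambda>i. f (z i)"] finI k z wnn
          by (auto simp: I_def spaceP)
        then show "norm (F k z) \<le> norm (B z)" by simp
      qed
    qed
  qed
  have swap: "\<And>k. k \<in> I \<Longrightarrow> integral\<^sup>L P (F k) = integral\<^sup>L P (F 0)"
  proof -
    fix k assume k: "k \<in> I"
    define t where "t n = (if n = 0 then k else if n = k then 0 else n)" for n
    have tI: "t \<in> I \<rightarrow> I" using k I0 by (auto simp: t_def)
    have tinj: "inj_on t I" by (auto simp: t_def inj_on_def)
    have D: "distr P P (\<lambda>\<omega>. \<lambda>n\<in>I. \<omega> (t n)) = P"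
      using distr_PiM_reindex[of I "\<lambda>_. Q" t I, OF PQ tinj tI] by (simp add: P_def)
    have Tm: "(\<lambda>\<omega>. \<lambda>n\<in>I. \<omega> (t n)) \<in> measurable P P"
      unfolding P_def using tI
      by (intro measurable_restrict measurable_component_singleton) auto
    have "integral\<^sup>L P (F 0) = integral\<^sup>L (distr P P (\<lambda>\<omega>. \<lambda>n\<in>I. \<omega> (t n))) (F 0)" using D by simp
    also have "\<dots> = (\<integral>\<omega>. F 0 (\<lambda>n\<in>I. \<omega> (t n)) \<partial>P)"
      using I0 by (intro integral_distr Tm) simp
    also have "\<dots> = integral\<^sup>L P (F k)"
    proof (intro Bochner_Integration.integral_cong refl)
      fix \<omega> assume "\<omega> \<in> space P"
      have kN: "k < N" using k by (simp add: I_def)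
      have G': "G (\<lambda>n\<in>I. \<omega> (t n)) = G \<omega>" unfolding G_def
        using sum_swap_idx[OF kN, of "\<lambda>i. wt p q (\<omega> i) * f (\<omega> i)"] by (simp add: I_def t_def)
      have S': "S (\<lambda>n\<in>I. \<omega> (t n)) = S \<omega>" unfolding S_def
        using sum_swap_idx[OF kN, of "\<lambda>i. wt p q (\<omega> i)"] by (simp add: I_def t_def)
      show "F 0 (\<lambda>n\<in>I. \<omega> (t n)) = F k \<omega>"
        unfolding F_def G' S' using I0 by (simp add: t_def)
    qed
    finally show "integral\<^sup>L P (F k) = integral\<^sup>L P (F 0)" by simp
  qed
  define J where "J = integral\<^sup>L P (\<lambda>z. (G z)\<^sup>2 / S z)"
  have Fsum: "\<And>z. (\<Sum>k\<in>I. F k z) = (G z)\<^sup>2 / S z"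
  proof -
    fix z
    have "(\<Sum>k\<in>I. F k z) = (\<Sum>k\<in>I. wt p q (z k) * f (z k)) * (G z / S z)"
      unfolding F_def by (simp add: sum_distrib_right sum_divide_distrib)
    then show "(\<Sum>k\<in>I. F k z) = (G z)\<^sup>2 / S z"
      by (simp add: G_def I_def power2_eq_square)
  qed
  have int_J: "integrable P (\<lambda>z. (G z)\<^sup>2 / S z)"
    using Bochner_Integration.integrable_sum[of I P F] int_F by (simp add: Fsum)
  have J_eq: "J = real N * integral\<^sup>L P (F 0)"
  proof -
    have "J = (\<Sum>k\<in>I. integral\<^sup>L P (F k))"
      unfolding J_def Fsum[symmetric] using int_F by (simp add: Bochner_Integration.integral_sum)
    also have "\<dots> = (\<Sum>k\<in>I. integral\<^sup>L P (F 0))" using swap by simp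
    finally show ?thesis by (simp add: I_def)
  qed

  have HzG: "\<And>z. (\<Sum>i<N. wt p q (z i) / S z * f (z i)) = G z / S z"
    by (simp add: G_def sum_divide_distrib)
  have Fub: "integral\<^sup>L P (F 0) = (\<integral>x. wt p q x * (f x * PN M p q N f x) \<partial>Q)
             \<and> PN M p q N f \<in> borel_measurable M"
  proof (cases "N = 1")
    case True
    have PNe: "PN M p q N f = f" using True by (simp add: PN_def fun_eq_iff)
    define \<phi> where "\<phi> x = wt p q x * f x * (wt p q x * f x) / wt p q x" for x
    have [measurable]: "\<phi> \<in> borel_measurable M" unfolding \<phi>_def by measurable
    have "integral\<^sup>L P (F 0) = integral\<^sup>L P (\<lambda>z. \<phi> (z 0))"
      by (intro Bochner_Integration.integral_cong) (simp_all add: F_def G_def S_def \<phi>_def True)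
    also have "\<dots> = integral\<^sup>L Q \<phi>" using comp[OF I0, of \<phi>] by simp
    also have "\<dots> = (\<integral>x. wt p q x * (f x * PN M p q N f x) \<partial>Q)"
      by (intro Bochner_Integration.integral_cong) (auto simp: \<phi>_def PNe)
    finally show ?thesis using PNe by simp
  next
    case False
    then have N2: "N \<ge> 2" using assms(9) by simp
    define K where "K = {1..<N}"
    define PK where "PK = PiM K (\<lambda>_. Q)"
    interpret PK: prob_space PK unfolding PK_def by (intro prob_space_PiM PQ)
    interpret QK: pair_prob_space Q PK by unfold_locales
    have IK: "insert 0 K = I" using N2 by (auto simp: K_def I_def)
    define U where "U y = (snd y)((0::nat) := fst y)" for y :: "'a \<times> (nat \<Rightarrow> 'a)"
    have Um: "U \<in> measurable (Q \<Otimes>\<^sub>M PK) P"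
      unfolding U_def P_def PK_def
      by (rule measurable_fun_upd[where J=K]) (use IK measurable_fst[of Q "Pi\<^sub>M K (\<lambda>_. Q)"] in auto)
    have D2: "distr (Q \<Otimes>\<^sub>M PK) P U = P"
      using distr_pair_PiM_eq_PiM[of K "\<lambda>_. Q" 0] PQ unfolding U_def P_def PK_def IK
      by (simp add: split_beta')
    define H where "H x X = (let z = X(0 := x) in
               (\<Sum>i<N. wt p q (z i) / (\<Sum>j<N. wt p q (z j)) * f (z i)))" for x X
    have PNe: "PN M p q N f = (\<lambda>x. \<integral>X. H x X \<partial>PK)"
      using False by (simp add: PN_def H_def PK_def K_def Q_def fun_eq_iff)
    define Hz where "Hz z = (\<Sum>i<N. wt p q (z i) / S z * f (z i))" for z
    have Hzm: "Hz \<in> borel_measurable P" unfolding Hz_def S_def P_def I_def by measurable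
    have HU: "\<And>x X. H x X = Hz (U (x, X))" by (simp add: H_def Hz_def U_def S_def Let_def)
    have Hm: "(\<lambda>(x, X). H x X) \<in> borel_measurable (Q \<Otimes>\<^sub>M PK)"
      using measurable_comp[OF Um Hzm] HU by (simp add: comp_def split_beta')
    have PNm: "PN M p q N f \<in> borel_measurable M"
      using PK.borel_measurable_lebesgue_integral[OF Hm] PNe by simp
    have F0U: "\<And>x X. F 0 (U (x, X)) = wt p q x * f x * H x X"
      unfolding F_def HU Hz_def HzG by (simp add: U_def fun_upd_def)
    have iU: "integrable (Q \<Otimes>\<^sub>M PK) (\<lambda>y. F 0 (U y))"
      using integrable_distr_eq[OF Um, of "F 0"] D2 int_F[OF I0] Fm[OF I0] by simp
    have "integral\<^sup>L P (F 0) = integral\<^sup>L (distr (Q \<Otimes>\<^sub>M PK) P U) (F 0)" using D2 by simp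
    also have "\<dots> = (\<integral>y. F 0 (U y) \<partial>(Q \<Otimes>\<^sub>M PK))"
      using I0 by (intro integral_distr Um) simp
    also have "\<dots> = (\<integral>x. \<integral>X. F 0 (U (x, X)) \<partial>PK \<partial>Q)"
      using QK.integral_fst[of "\<lambda>x X. F 0 (U (x, X))"] iU by (simp add: split_beta')
    also have "\<dots> = (\<integral>x. wt p q x * (f x * PN M p q N f x) \<partial>Q)"
      by (intro Bochner_Integration.integral_cong refl) (simp add: F0U PNe)
    finally show ?thesis using PNm by simp
  qed

  have PNm[measurable]: "PN M p q N f \<in> borel_measurable M" using Fub by simp
  have Npos: "real N > 0" using assms(9) by simp
  have inner_eq: "inner_pi M p f (PN M p q N f) = J / real N"
  proof -
    have "inner_pi M p f (PN M p q N f) = (\<integral>x. wt p q x * (f x * PN M p q N f x) \<partial>Q)"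
      unfolding inner_pi_def by (rule transfer) measurable
    also have "\<dots> = integral\<^sup>L P (F 0)" using Fub by simp
    finally show ?thesis using J_eq Npos by (simp add: field_simps)
  qed
  have RHS: "(\<integral>z. indicator (WN M p q N) z *
              ((\<Sum>i<N. wt p q (z i) * f (z i))\<^sup>2 / (\<Sum>j<N. wt p q (z j)))
            \<partial>PiM {..<N} (\<lambda>_. density M q)) = J"
    unfolding J_def P_def I_def Q_def
  proof (intro Bochner_Integration.integral_cong refl)
    fix z assume z: "z \<in> space (PiM {..<N} (\<lambda>_. density M q))"
    then have zP: "z \<in> space P" by (simp add: P_def I_def Q_def)
    have zM: "z \<in> space (PiM {..<N} (\<lambda>_. M))" using z by (simp add: space_PiM)
    show "indicator (WN M p q N) z * ((\<Sum>i<N. wt p q (z i) * f (z i))\<^sup>2 / (\<Sum>j<N. wt p q (z j)))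
          = (G z)\<^sup>2 / S z"
    proof (cases "S z > 0")
      case True then show ?thesis using zM by (simp add: WN_def G_def S_def)
    next
      case False then have "S z = 0" using SP[OF zP] by simp
      then show ?thesis by (simp add: G_def S_def)
    qed
  qed
  have Jnn: "J \<ge> 0" unfolding J_def
    by (intro Bochner_Integration.integral_nonneg divide_nonneg_nonneg SP) simp_all
  have ff: "inner_pi M p f f = (\<integral>x. wt p q x * (f x * f x) \<partial>Q)"
    unfolding inner_pi_def by (rule transfer) measurable
  have int_wff: "integrable Q (\<lambda>x. wt p q x * (f x * f x))"
    using int_wf2 by (simp add: power2_eq_square)
  have ff0: "inner_pi M p f f = 0 \<longleftrightarrow> (AE x in Q. wt p q x * (f x * f x) = 0)"
    unfolding ff using int_wff wnn by (intro integral_nonneg_eq_0_iff_AE) (auto intro!: AE_I2)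
  have J0: "J = 0 \<longleftrightarrow> (AE z in P. (G z)\<^sup>2 / S z = 0)"
    unfolding J_def using int_J SP by (intro integral_nonneg_eq_0_iff_AE) (auto intro!: AE_I2)
  have zero: "J = 0 \<longleftrightarrow> inner_pi M p f f = 0"
  proof
    assume "inner_pi M p f f = 0"
    then have "AE x in Q. wt p q x * (f x * f x) = 0" using ff0 by simp
    then have "AE x in Q. wt p q x * f x = 0" by eventually_elim auto
    then have "\<forall>i\<in>I. AE z in P. wt p q (z i) * f (z i) = 0"
      unfolding P_def using PQ by (auto intro!: AE_PiM_component)
    then have "AE z in P. \<forall>i\<in>I. wt p q (z i) * f (z i) = 0"
      using finI by (rule eventually_ball_finite[rotated])
    then have "AE z in P. (G z)\<^sup>2 / S z = 0"
    proof eventually_elim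
      case (elim z)
      then have "G z = 0" unfolding G_def I_def by (intro sum.neutral) simp
      then show ?case by simp
    qed
    then show "J = 0" using J0 by simp
  next
    assume "J = 0"
    then have "AE z in P. (G z)\<^sup>2 / S z = 0" using J0 by simp
    then have AG: "AE z in P. G z = 0"
      using AE_space
    proof eventually_elim
      case (elim z)
      show "G z = 0"
      proof (cases "S z = 0")
        case True
        have "\<forall>i\<in>{..<N}. wt p q (z i) = 0"
          using True elim(2) wnn unfolding S_def
          by (subst sum_nonneg_eq_0_iff[symmetric]) (auto simp: spaceP I_def)
        then show ?thesis by (simp add: G_def)
      next
        case False then show ?thesis using elim(1) by simp
      qed
    qed
    have nullA: "AE x in Q. x \<notin> A"
      if A: "A \<in> sets M" and GA: "\<And>z. z \<in> PiE I (\<lambda>_. A) \<Longrightarrow> G z \<noteq> 0" for A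
    proof -
      have sA: "PiE I (\<lambda>_. A) \<in> sets P" unfolding P_def using finI A by (intro sets_PiM_I_finite) auto
      have "AE z in P. z \<notin> PiE I (\<lambda>_. A)" using AG by eventually_elim (use GA in auto)
      then have "emeasure P (PiE I (\<lambda>_. A)) = 0" using AE_iff_null_sets[OF sA] by auto
      moreover have "emeasure P (PiE I (\<lambda>_. A)) = emeasure Q A ^ N"
        unfolding P_def using A finI by (subst PS.emeasure_PiM) (auto simp: I_def)
      ultimately have "emeasure Q A = 0" using assms(9) by simp
      then have "A \<in> null_sets Q" using A by auto
      then show ?thesis using A by (subst AE_iff_null_sets[symmetric]) auto
    qed
    define Ap where "Ap = {x \<in> space M. wt p q x * f x > 0}"
    define An where "An = {x \<in> space M. wt p q x * f x < 0}"
    have "Ap \<in> sets M" unfolding Ap_def by measurable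
    moreover have "G z \<noteq> 0" if "z \<in> PiE I (\<lambda>_. Ap)" for z
    proof -
      have "(\<Sum>i\<in>I. 0) < (\<Sum>i\<in>I. wt p q (z i) * f (z i))"
        using that finI I0 by (intro sum_strict_mono) (auto simp: Ap_def)
      then show ?thesis by (simp add: G_def I_def)
    qed
    ultimately have AEp: "AE x in Q. x \<notin> Ap" by (rule nullA)
    have "An \<in> sets M" unfolding An_def by measurable
    moreover have "G z \<noteq> 0" if "z \<in> PiE I (\<lambda>_. An)" for z
    proof -
      have "(\<Sum>i\<in>I. wt p q (z i) * f (z i)) < (\<Sum>i\<in>I. 0)"
        using that finI I0 by (intro sum_strict_mono) (auto simp: An_def)
      then show ?thesis by (simp add: G_def I_def)
    qed
    ultimately have AEn: "AE x in Q. x \<notin> An" by (rule nullA)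
    have "AE x in Q. wt p q x * (f x * f x) = 0"
      using AEp AEn AE_space
    proof eventually_elim
      case (elim x)
      then have "wt p q x * f x = 0" by (auto simp: Ap_def An_def)
      then show ?case by (simp add: mult.assoc[symmetric])
    qed
    then show "inner_pi M p f f = 0" using ff0 by simp
  qed
  show ?thesis
    using inner_eq RHS Jnn zero Npos by auto
qed

end
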